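(* An irreducible plane algebraic curve of degree $d$ has at most $4d$ symmetries, unless it is a line or a circle.
   Context: A plane algebraic curve is an infinite set $Z_{\mathbb{R}}(f)=\{(a,b)\in\mathbb{R}^2: f(a,b)=0\}$ for some nonzero $f\in\mathbb{R}[x,y]$; its degree is the minimum degree of such an $f$; it is irreducible if $f$ can be chosen irreducible over $\mathbb{R}$. A symmetry of a curve $C$ is an isometry $T$ of $\mathbb{R}^2$ with $T(C)=C$. *)

theory Defs
  imports "HOL-Analysis.Analysis" "HOL-Computational_Algebra.Polynomial_Factorial"
begin

text \<open>Bivariate real polynomials are represented as elements of R[x][y],
  i.e. polynomials in y whose coefficients are polynomials in x.\<close>

type_synonym bipoly = "real poly poly"

definition eval2 :: "bipoly \<Rightarrow> real \<Rightarrow> real \<Rightarrow> real" where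
  "eval2 f a b = poly (map_poly (\<lambda>c. poly c a) f) b"

definition total_degree :: "bipoly \<Rightarrow> nat" where
  "total_degree f = Max ({i + degree (coeff f i) | i. i \<le> degree f \<and> coeff f i \<noteq> 0} \<union> {0})"

definition zero_set :: "bipoly \<Rightarrow> (real \<times> real) set" where
  "zero_set f = {(a, b). eval2 f a b = 0}"

definition plane_curve :: "(real \<times> real) set \<Rightarrow> bool" where
  "plane_curve C \<longleftrightarrow> infinite C \<and> (\<exists>f. f \<noteq> 0 \<and> C = zero_set f)"

definition curve_degree :: "(real \<times> real) set \<Rightarrow> nat" where
  "curve_degree C = (LEAST d. \<exists>f. f \<noteq> 0 \<and> zero_set f = C \<and> total_degree f = d)"

definition irreducible_curve :: "(real \<times> real) set \<Rightarrow> bool" where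
  "irreducible_curve C \<longleftrightarrow> plane_curve C \<and> (\<exists>f. irreducible f \<and> zero_set f = C)"

definition isometry :: "(real \<times> real \<Rightarrow> real \<times> real) \<Rightarrow> bool" where
  "isometry T \<longleftrightarrow> (\<forall>p q. dist (T p) (T q) = dist p q)"

definition symmetries :: "(real \<times> real) set \<Rightarrow> (real \<times> real \<Rightarrow> real \<times> real) set" where
  "symmetries C = {T. isometry T \<and> T ` C = C}"

definition is_line :: "(real \<times> real) set \<Rightarrow> bool" where
  "is_line C \<longleftrightarrow> (\<exists>a b c. (a, b) \<noteq> (0, 0) \<and> C = {(x, y). a * x + b * y = c})"

definition is_circle :: "(real \<times> real) set \<Rightarrow> bool" where
  "is_circle C \<longleftrightarrow> (\<exists>x0 y0 r. r > 0 \<and> C = {(x, y). (x - x0)^2 + (y - y0)^2 = r^2})"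

end

theory Submission
  imports Defs
begin


lemma eval2_alt: "eval2 f a b = poly (poly f [:b:]) a"
  unfolding eval2_def
proof (induction f)
  case 0
  then show ?case by simp
next
  case (pCons c p)
  then show ?case by (simp add: map_poly_pCons)
qed

lemma eval2_mult[simp]: "eval2 (p * q) a b = eval2 p a b * eval2 q a b"
  by (simp add: eval2_alt)
lemma eval2_add[simp]: "eval2 (p + q) a b = eval2 p a b + eval2 q a b"
  by (simp add: eval2_alt)
lemma eval2_const[simp]: "eval2 [:[:k:]:] a b = k"
  by (simp add: eval2_alt)
lemma eval2_smult[simp]: "eval2 (smult c p) a b = poly c a * eval2 p a b"
  by (simp add: eval2_alt)
lemma eval2_0[simp]: "eval2 0 a b = 0"
  by (simp add: eval2_alt)
lemma eval2_pCons: "eval2 (pCons c p) a b = poly c a + b * eval2 p a b"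
  by (simp add: eval2_alt)

lemma unit_bipoly:
  fixes u :: bipoly
  assumes "u dvd 1" shows "\<exists>k. k \<noteq> 0 \<and> u = [:[:k:]:]"
proof -
  obtain c where c: "u = [:c:]" "c dvd 1" using assms is_unit_poly_iff by blast
  obtain k where "c = [:k:]" "k dvd 1" using c(2) is_unit_poly_iff by blast
  then show ?thesis using c by auto
qed

lemma irreducible_dvd_zero_set:
  fixes f Q :: bipoly
  assumes "irreducible f" "f = Q * q" "\<not> Q dvd 1"
  shows "zero_set f = zero_set Q"
proof -
  have "q dvd 1" using irreducibleD[OF assms(1,2)] assms(3) by blast
  then obtain k where "k \<noteq> 0" "q = [:[:k:]:]" using unit_bipoly by blast
  then show ?thesis using assms(2) by (auto simp: zero_set_def)
qed

lemma monic_div: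
  fixes f Q :: bipoly
  assumes "lead_coeff Q = 1"
  obtains q r where "f = Q * q + r" "r = 0 \<or> degree r < degree Q"
proof -
  have Q0: "Q \<noteq> 0" using assms by auto
  obtain q r where qr: "pseudo_divmod f Q = (q, r)" by (metis surj_pair)
  from pseudo_divmod[OF Q0 qr] assms show ?thesis using that by auto
qed

lemma line_lemma:
  fixes f :: bipoly
  assumes irr: "irreducible f" and ab: "(\<alpha>, \<beta>) \<noteq> (0, 0)"
    and S: "S \<subseteq> zero_set f" "S \<subseteq> {(x, y). \<alpha> * x + \<beta> * y = \<gamma>}" "infinite S"
  shows "is_line (zero_set f)"
proof (cases "\<beta> = 0")
  case False
  define Q :: bipoly where "Q = [:[:-\<gamma>/\<beta>, \<alpha>/\<beta>:], 1:]"
  have lc: "lead_coeff Q = 1" "degree Q = 1" by (auto simp: Q_def)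
  obtain q r where qr: "f = Q * q + r" "r = 0 \<or> degree r < degree Q"
    using monic_div[OF lc(1)] by blast
  have dr: "degree r = 0" using qr(2) lc by auto
  hence r: "r = [:coeff r 0:]" by (metis degree_eq_zeroE coeff_pCons_0)
  have evQ: "eval2 Q x y = 0 \<longleftrightarrow> \<alpha> * x + \<beta> * y = \<gamma>" for x y
    using False by (auto simp: Q_def eval2_pCons field_simps)
  have roots: "poly (coeff r 0) x = 0" if xS: "x \<in> fst ` S" for x
  proof -
    obtain y where xy: "(x, y) \<in> S" using xS by force
    hence "eval2 f x y = 0" "eval2 Q x y = 0" using S evQ by (auto simp: zero_set_def)
    hence "eval2 r x y = 0" using qr(1) by simp
    thus ?thesis by (subst (asm) r) (simp add: eval2_pCons)
  qed
  have "inj_on fst S"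
  proof
    fix p p' assume "p \<in> S" "p' \<in> S" "fst p = fst p'"
    then obtain x y y' where pp: "p = (x, y)" "p' = (x, y')" "\<alpha> * x + \<beta> * y = \<gamma>" "\<alpha> * x + \<beta> * y' = \<gamma>"
      using S(2) by (cases p, cases p') auto
    hence "\<beta> * y = \<beta> * y'" by linarith
    then show "p = p'" using pp False by simp
  qed
  hence "infinite (fst ` S)" using S(3) finite_imageD by blast
  hence "coeff r 0 = 0" using roots poly_roots_finite
    by (metis (mono_tags, lifting) finite_subset mem_Collect_eq subsetI)
  hence "f = Q * q" using qr(1) r by simp
  moreover have "\<not> Q dvd 1"
    using lc by (auto simp: is_unit_poly_iff)
  ultimately have "zero_set f = zero_set Q" using irreducible_dvd_zero_set irr by blast
  also have "\<dots> = {(x, y). \<alpha> * x + \<beta> * y = \<gamma>}" using evQ by (auto simp: zero_set_def)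
  finally show ?thesis unfolding is_line_def using ab by blast
next
  case True
  hence a: "\<alpha> \<noteq> 0" using ab by auto
  define k where "k = \<gamma> / \<alpha>"
  have Sk: "p \<in> S \<Longrightarrow> fst p = k" for p using S(2) True a by (auto simp: k_def field_simps)
  have "inj_on snd S"
  proof
    fix p p' assume "p \<in> S" "p' \<in> S" "snd p = snd p'"
    then show "p = p'" using Sk by (simp add: prod_eq_iff)
  qed
  hence inf: "infinite (snd ` S)" using S(3) finite_imageD by blast
  have "poly (map_poly (\<lambda>c. poly c k) f) y = 0" if yS: "y \<in> snd ` S" for y
  proof -
    obtain x where "(x, y) \<in> S" using yS by force
    moreover hence "x = k" using Sk by force
    ultimately show ?thesis using S(1) by (auto simp: zero_set_def eval2_def)
  qed
  hence "map_poly (\<lambda>c. poly c k) f = 0" using inf poly_roots_finite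
    by (metis (mono_tags, lifting) finite_subset mem_Collect_eq subsetI)
  hence "poly (coeff f i) k = 0" for i
    by (metis coeff_0 coeff_map_poly poly_0)
  hence "[:-k, 1:] dvd coeff f i" for i using poly_eq_0_iff_dvd by blast
  hence "[:[:-k, 1:]:] dvd f" using const_poly_dvd_iff by blast
  then obtain q where fq: "f = [:[:-k, 1:]:] * q" by blast
  have "\<not> [:[:-k, 1:]:] dvd (1::bipoly)"
    by (auto simp: is_unit_poly_iff)
  hence "zero_set f = zero_set [:[:-k, 1:]:]" using irreducible_dvd_zero_set irr fq by blast
  also have "\<dots> = {(x, y). 1 * x + 0 * y = k}" by (auto simp: zero_set_def eval2_pCons)
  finally show ?thesis unfolding is_line_def by (metis prod.inject zero_neq_one)
qed



lemma circle_lemma: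
  fixes f :: bipoly
  assumes irr: "irreducible f" and r: "r > 0"
    and sub: "{(x, y). (x - x0)^2 + (y - y0)^2 = r^2} - {z} \<subseteq> zero_set f"
  shows "is_circle (zero_set f)"
proof -
  define Q :: bipoly where "Q = [:[:x0^2 + y0^2 - r^2, -2*x0, 1:], [:-2*y0:], 1:]"
  have lc: "lead_coeff Q = 1" "degree Q = 2" by (auto simp: Q_def)
  obtain q rm where qr: "f = Q * q + rm" "rm = 0 \<or> degree rm < degree Q"
    using monic_div[OF lc(1)] by blast
  have dr: "degree rm \<le> 1" using qr(2) lc by auto
  define a0 a1 where "a0 = coeff rm 0" and "a1 = coeff rm 1"
  have rm: "rm = pCons a0 [:a1:]"
    by (rule poly_eqI) (use dr in \<open>auto simp: a0_def a1_def coeff_pCons split: nat.splits intro!: coeff_eq_0\<close>)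
  have evQ: "eval2 Q x y = 0 \<longleftrightarrow> (x - x0)^2 + (y - y0)^2 = r^2" for x y
    by (auto simp: Q_def eval2_pCons power2_eq_square algebra_simps)
  have evr: "eval2 rm x y = poly a0 x + y * poly a1 x" for x y
    by (simp add: rm eval2_pCons)
  have key: "eval2 rm x y = 0" if "(x - x0)^2 + (y - y0)^2 = r^2" "(x, y) \<noteq> z" for x y
  proof -
    have "eval2 f x y = 0" using sub that by (auto simp: zero_set_def)
    moreover have "eval2 Q x y = 0" using evQ that by simp
    ultimately show ?thesis using qr(1) by simp
  qed
  define I where "I = {x0 - r<..<x0 + r} - {fst z}"
  have infI: "infinite I" unfolding I_def using r by simp
  have both: "poly a0 x + (y0 + s) * poly a1 x = 0 \<and> poly a0 x + (y0 - s) * poly a1 x = 0 \<and> s > 0"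
    if "x \<in> I" and s: "s = sqrt (r^2 - (x - x0)^2)" for x s
  proof -
    have "\<bar>x - x0\<bar> < r" using that by (auto simp: I_def)
    hence "\<bar>x - x0\<bar>^2 < r^2" by (intro power_strict_mono) auto
    hence lt: "(x - x0)^2 < r^2" by simp
    hence sp: "s > 0" using s by simp
    have ss: "s^2 = r^2 - (x - x0)^2" using s lt by simp
    have nz: "fst z \<noteq> x" using that by (auto simp: I_def)
    have "eval2 rm x (y0 + s) = 0" using ss nz by (intro key) auto
    moreover have "eval2 rm x (y0 - s) = 0" using ss nz by (intro key) auto
    ultimately show ?thesis using sp evr by simp
  qed
  have a1: "poly a1 x = 0" if "x \<in> I" for x
  proof -
    define s where "s = sqrt (r^2 - (x - x0)^2)"
    from both[OF that s_def] have e: "poly a0 x + (y0 + s) * poly a1 x = 0" "poly a0 x + (y0 - s) * poly a1 x = 0" "s > 0" by auto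
    have "(y0 + s) * poly a1 x - (y0 - s) * poly a1 x = 0" using e(1,2) by linarith
    moreover have "(y0 + s) * poly a1 x - (y0 - s) * poly a1 x = 2 * (s * poly a1 x)" by (simp add: algebra_simps)
    ultimately have "s * poly a1 x = 0" by simp
    thus ?thesis using e(3) by simp
  qed
  have "a1 = 0" using a1 infI poly_roots_finite
    by (metis (mono_tags, lifting) finite_subset mem_Collect_eq subsetI)
  have a0: "poly a0 x = 0" if "x \<in> I" for x
    using both[OF that refl] \<open>a1 = 0\<close> by simp
  have "a0 = 0" using a0 infI poly_roots_finite
    by (metis (mono_tags, lifting) finite_subset mem_Collect_eq subsetI)
  hence "f = Q * q" using qr(1) rm \<open>a1 = 0\<close> by simp
  moreover have "\<not> Q dvd 1" using lc by (auto simp: is_unit_poly_iff)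
  ultimately have "zero_set f = zero_set Q" using irreducible_dvd_zero_set irr by blast
  also have "\<dots> = {(x, y). (x - x0)^2 + (y - y0)^2 = r^2}" using evQ by (auto simp: zero_set_def)
  finally show ?thesis unfolding is_circle_def using r by blast
qed



lemma td_ge: "coeff f i \<noteq> 0 \<Longrightarrow> i + degree (coeff f i) \<le> total_degree f"
  unfolding total_degree_def
  by (rule Max_ge) (auto intro: le_degree simp: finite_image_set2 )

lemma td_fin: "finite ({i + degree (coeff f i) | i. i \<le> degree f \<and> coeff f i \<noteq> 0} \<union> {0})"
proof -
  have "{i + degree (coeff f i) | i. i \<le> degree f \<and> coeff f i \<noteq> 0} \<subseteq> (\<lambda>i. i + degree (coeff f i)) ` {..degree f}"
    by auto
  thus ?thesis by (meson finite_UnI finite_atMost finite_imageI finite_insert finite.emptyI finite_subset)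
qed

lemma td_ge': "coeff f i \<noteq> 0 \<Longrightarrow> i + degree (coeff f i) \<le> total_degree f"
  unfolding total_degree_def
  by (rule Max_ge[OF td_fin]) (auto intro: le_degree)

lemma td_le: "(\<And>i. coeff f i \<noteq> 0 \<Longrightarrow> i + degree (coeff f i) \<le> n) \<Longrightarrow> total_degree f \<le> n"
  unfolding total_degree_def
  by (rule Max.boundedI[OF td_fin]) auto

lemma homog1:
  fixes c X D :: "real poly"
  assumes X: "degree X \<le> 2" and D: "degree D \<le> 2" and c: "degree c \<le> d"
  shows "\<exists>h. degree h \<le> 2*d \<and> (\<forall>t. poly D t \<noteq> 0 \<longrightarrow> poly h t = poly D t ^ d * poly c (poly X t / poly D t))"
  using c
proof (induction c arbitrary: d)
  case 0
  then show ?case by (intro exI[of _ 0]) auto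
next
  case (pCons a c)
  have Dd: "degree (D ^ n) \<le> 2 * n" for n
    using degree_power_le[of D n] D by (meson dual_order.trans mult_le_mono1 mult.commute)
  show ?case
  proof (cases "c = 0")
    case True
    show ?thesis
      by (intro exI[of _ "smult a (D ^ d)"]) (use Dd True in \<open>auto simp: degree_smult_le intro: order.trans[OF degree_smult_le]\<close>)
  next
    case False
    then obtain d' where d: "d = Suc d'" "degree c \<le> d'" using pCons.prems by (cases d) auto
    obtain h' where h': "degree h' \<le> 2 * d'" "\<And>t. poly D t \<noteq> 0 \<Longrightarrow> poly h' t = poly D t ^ d' * poly c (poly X t / poly D t)"
      using pCons.IH[OF d(2)] by blast
    have deg: "degree (smult a (D ^ d) + X * h') \<le> 2 * d"
    proof (rule degree_add_le)
      show "degree (smult a (D ^ d)) \<le> 2 * d" using Dd[of d] degree_smult_le order.trans by blast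
      have "degree (X * h') \<le> degree X + degree h'" by (rule degree_mult_le)
      thus "degree (X * h') \<le> 2 * d" using X h'(1) d(1) by simp
    qed
    show ?thesis
    proof (intro exI[of _ "smult a (D ^ d) + X * h'"] conjI allI impI deg)
      fix t assume Dt: "poly D t \<noteq> 0"
      show "poly (smult a (D ^ d) + X * h') t = poly D t ^ d * poly (pCons a c) (poly X t / poly D t)"
        using Dt by (simp add: h'(2) d(1) algebra_simps)
    qed
  qed
qed

lemma td_pCons:
  assumes "p \<noteq> 0"
  shows "total_degree p + 1 \<le> total_degree (pCons c p)"
proof -
  obtain i where "coeff p i \<noteq> 0" using assms by (metis leading_coeff_0_iff)
  hence ge1: "1 \<le> total_degree (pCons c p)" using td_ge[of "pCons c p" "Suc i"] by simp
  have "total_degree p \<le> total_degree (pCons c p) - 1"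
  proof (rule td_le)
    fix i assume "coeff p i \<noteq> 0"
    thus "i + degree (coeff p i) \<le> total_degree (pCons c p) - 1"
      using td_ge[of "pCons c p" "Suc i"] by simp
  qed
  thus ?thesis using ge1 by simp
qed

lemma td_pCons0: "degree c \<le> total_degree (pCons c p)"
  using td_ge[of "pCons c p" 0] by (cases "c = 0") auto

lemma homog2:
  fixes f :: bipoly and X Y D :: "real poly"
  assumes X: "degree X \<le> 2" and Y: "degree Y \<le> 2" and D: "degree D \<le> 2" and f: "total_degree f \<le> d"
  shows "\<exists>g. degree g \<le> 2*d \<and> (\<forall>t. poly D t \<noteq> 0 \<longrightarrow> poly g t = poly D t ^ d * eval2 f (poly X t / poly D t) (poly Y t / poly D t))"
  using f
proof (induction f arbitrary: d)
  case 0
  then show ?case by (intro exI[of _ 0]) auto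
next
  case (pCons c p)
  have cd: "degree c \<le> d" using td_pCons0[of c p] pCons.prems by linarith
  obtain h where h: "degree h \<le> 2 * d" "\<And>t. poly D t \<noteq> 0 \<Longrightarrow> poly h t = poly D t ^ d * poly c (poly X t / poly D t)"
    using homog1[OF X D cd] by blast
  show ?case
  proof (cases "p = 0")
    case True
    show ?thesis using h True by (intro exI[of _ h]) (auto simp: eval2_pCons)
  next
    case False
    then obtain d' where d: "d = Suc d'" "total_degree p \<le> d'" using td_pCons[OF False, of c] pCons.prems
      by (cases d) auto
    obtain g' where g': "degree g' \<le> 2 * d'" "\<And>t. poly D t \<noteq> 0 \<Longrightarrow> poly g' t = poly D t ^ d' * eval2 p (poly X t / poly D t) (poly Y t / poly D t)"
      using pCons.IH[OF d(2)] by blast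
    have deg: "degree (h + Y * g') \<le> 2 * d"
    proof (rule degree_add_le)
      show "degree h \<le> 2 * d" by (rule h(1))
      have "degree (Y * g') \<le> degree Y + degree g'" by (rule degree_mult_le)
      thus "degree (Y * g') \<le> 2 * d" using Y g'(1) d(1) by simp
    qed
    show ?thesis
    proof (intro exI[of _ "h + Y * g'"] conjI allI impI deg)
      fix t assume Dt: "poly D t \<noteq> 0"
      show "poly (h + Y * g') t = poly D t ^ d * eval2 (pCons c p) (poly X t / poly D t) (poly Y t / poly D t)"
        using Dt by (simp add: h(2) g'(2) d(1) eval2_pCons algebra_simps)
    qed
  qed
qed



definition cc :: "real \<Rightarrow> real" where "cc t = (1 - t^2) / (1 + t^2)"
definition ss :: "real \<Rightarrow> real" where "ss t = 2 * t / (1 + t^2)"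

lemma cc_ss: "cc t ^ 2 + ss t ^ 2 = 1"
proof -
  have p: "1 + t^2 > 0" by (simp add: add_pos_nonneg)
  have e: "(1 - t^2)^2 + (2*t)^2 = (1 + t^2)^2" by algebra
  have "cc t ^ 2 + ss t ^ 2 = ((1 - t^2)^2 + (2*t)^2) / (1 + t^2)^2"
    unfolding cc_def ss_def by (simp add: power_divide add_divide_distrib)
  also have "\<dots> = 1" using e p by simp
  finally show ?thesis .
qed

lemma cc_pos: "1 + cc t > 0"
proof -
  have p: "1 + t^2 > 0" by (simp add: add_pos_nonneg)
  have "1 + cc t = 2 / (1 + t^2)" unfolding cc_def using p by (simp add: field_simps)
  thus ?thesis using p by simp
qed

lemma ss_cc_inv: "ss t / (1 + cc t) = t"
proof -
  have p: "1 + t^2 > 0" by (simp add: add_pos_nonneg)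
  have "1 + cc t = 2 / (1 + t^2)" unfolding cc_def using p by (simp add: field_simps)
  thus ?thesis using p by (simp add: ss_def field_simps)
qed

lemma cc_ss_of:
  assumes "X^2 + Y^2 = 1" "X \<noteq> -1"
  shows "cc (Y / (1 + X)) = X \<and> ss (Y / (1 + X)) = Y"
proof -
  have X1: "1 + X \<noteq> 0" using assms(2) by linarith
  have Y2: "Y^2 = 1 - X^2" using assms(1) by simp
  have den: "(1 + X)^2 + Y^2 = 2 * (1 + X)" using Y2 by (simp add: power2_eq_square algebra_simps)
  have dpos: "(1 + X)^2 + Y^2 \<noteq> 0" using den X1 by simp
  have q2: "(1 + X)^2 \<noteq> 0" using X1 by simp
  have a1: "1 - (Y / (1 + X))^2 = ((1 + X)^2 - Y^2) / (1 + X)^2"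
    using q2 by (simp add: power_divide field_simps)
  have a2: "1 + (Y / (1 + X))^2 = ((1 + X)^2 + Y^2) / (1 + X)^2"
    using q2 by (simp add: power_divide field_simps)
  have "cc (Y / (1 + X)) = ((1 + X)^2 - Y^2) / ((1 + X)^2 + Y^2)"
    unfolding cc_def a1 a2 using q2 dpos by simp
  also have "(1 + X)^2 - Y^2 = X * (2 * (1 + X))" using Y2 by (simp add: power2_eq_square algebra_simps)
  also have "X * (2 * (1 + X)) / ((1 + X)^2 + Y^2) = X" using den X1 by simp
  finally have 1: "cc (Y / (1 + X)) = X" .
  have "ss (Y / (1 + X)) = 2 * Y * (1 + X) / ((1 + X)^2 + Y^2)"
    unfolding ss_def a2 using X1 q2 dpos by (simp add: power2_eq_square)
  also have "\<dots> = Y" using den X1 by (simp add: field_simps)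
  finally show ?thesis using 1 by simp
qed

definition Pm :: "real \<Rightarrow> real \<Rightarrow> real \<Rightarrow> real \<Rightarrow> real \<Rightarrow> real \<Rightarrow> real \<times> real" where
  "Pm x0 y0 r u1 u2 t = (x0 + r * (u1 * cc t - u2 * ss t), y0 + r * (u2 * cc t + u1 * ss t))"

definition tinv :: "real \<Rightarrow> real \<Rightarrow> real \<Rightarrow> real \<Rightarrow> real \<Rightarrow> real \<times> real \<Rightarrow> real" where
  "tinv x0 y0 r u1 u2 p = (let a = (fst p - x0) / r; b = (snd p - y0) / r in
      (u1 * b - u2 * a) / (1 + (u1 * a + u2 * b)))"

lemma Pm_circ:
  assumes u: "u1^2 + u2^2 = 1"
  shows "(fst (Pm x0 y0 r u1 u2 t) - x0)^2 + (snd (Pm x0 y0 r u1 u2 t) - y0)^2 = r^2"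
proof -
  have "(u1 * cc t - u2 * ss t)^2 + (u2 * cc t + u1 * ss t)^2 = (u1^2 + u2^2) * (cc t ^ 2 + ss t ^ 2)"
    by (simp add: power2_eq_square algebra_simps)
  also have "\<dots> = 1" using u cc_ss by simp
  finally have e: "(u1 * cc t - u2 * ss t)^2 + (u2 * cc t + u1 * ss t)^2 = 1" .
  have "(fst (Pm x0 y0 r u1 u2 t) - x0)^2 + (snd (Pm x0 y0 r u1 u2 t) - y0)^2
     = r^2 * ((u1 * cc t - u2 * ss t)^2 + (u2 * cc t + u1 * ss t)^2)"
    by (simp add: Pm_def power2_eq_square algebra_simps)
  thus ?thesis using e by simp
qed

lemma rot_back:
  fixes u1 u2 c s :: real
  assumes u: "u1^2 + u2^2 = 1"
  shows "u1 * (u1 * c - u2 * s) + u2 * (u2 * c + u1 * s) = c"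
    and "u1 * (u2 * c + u1 * s) - u2 * (u1 * c - u2 * s) = s"
proof -
  have "u1 * (u1 * c - u2 * s) + u2 * (u2 * c + u1 * s) = (u1^2 + u2^2) * c"
    by (simp add: power2_eq_square algebra_simps)
  thus "u1 * (u1 * c - u2 * s) + u2 * (u2 * c + u1 * s) = c" using u by simp
  have "u1 * (u2 * c + u1 * s) - u2 * (u1 * c - u2 * s) = (u1^2 + u2^2) * s"
    by (simp add: power2_eq_square algebra_simps)
  thus "u1 * (u2 * c + u1 * s) - u2 * (u1 * c - u2 * s) = s" using u by simp
qed

lemma tinv_Pm:
  assumes u: "u1^2 + u2^2 = 1" and r: "r > 0"
  shows "tinv x0 y0 r u1 u2 (Pm x0 y0 r u1 u2 t) = t"
proof -
  have a: "(fst (Pm x0 y0 r u1 u2 t) - x0) / r = u1 * cc t - u2 * ss t"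
   and b: "(snd (Pm x0 y0 r u1 u2 t) - y0) / r = u2 * cc t + u1 * ss t"
    using r by (auto simp: Pm_def)
  show ?thesis unfolding tinv_def Let_def a b rot_back[OF u] by (rule ss_cc_inv)
qed

lemma Pm_excl:
  assumes u: "u1^2 + u2^2 = 1" and r: "r > 0"
  shows "Pm x0 y0 r u1 u2 t \<noteq> (x0 - r * u1, y0 - r * u2)"
proof
  assume h: "Pm x0 y0 r u1 u2 t = (x0 - r * u1, y0 - r * u2)"
  hence "r * (u1 * cc t - u2 * ss t + u1) = 0" "r * (u2 * cc t + u1 * ss t + u2) = 0"
    by (auto simp: Pm_def algebra_simps)
  hence "u1 * cc t - u2 * ss t + u1 = 0" "u2 * cc t + u1 * ss t + u2 = 0" using r by auto
  hence "u1 * cc t - u2 * ss t = - u1" "u2 * cc t + u1 * ss t = - u2" by linarith+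
  hence "u1 * (u1 * cc t - u2 * ss t) + u2 * (u2 * cc t + u1 * ss t) = -(u1^2 + u2^2)"
    by (simp add: power2_eq_square)
  hence "cc t = -1" using rot_back(1)[OF u] u by simp
  thus False using cc_pos[of t] by simp
qed

lemma Pm_tinv:
  assumes u: "u1^2 + u2^2 = 1" and r: "r > 0"
    and p: "(fst p - x0)^2 + (snd p - y0)^2 = r^2" and ne: "p \<noteq> (x0 - r * u1, y0 - r * u2)"
  shows "Pm x0 y0 r u1 u2 (tinv x0 y0 r u1 u2 p) = p"
proof -
  define a b where "a = (fst p - x0) / r" and "b = (snd p - y0) / r"
  have ab: "a^2 + b^2 = 1" using p r unfolding a_def b_def
    by (simp add: power_divide add_divide_distrib[symmetric])
  define X Y where "X = u1 * a + u2 * b" and "Y = u1 * b - u2 * a"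
  have aX: "u1 * X - u2 * Y = a" and bX: "u2 * X + u1 * Y = b"
  proof -
    have "u1 * X - u2 * Y = (u1^2 + u2^2) * a" unfolding X_def Y_def by (simp add: power2_eq_square algebra_simps)
    thus "u1 * X - u2 * Y = a" using u by simp
    have "u2 * X + u1 * Y = (u1^2 + u2^2) * b" unfolding X_def Y_def by (simp add: power2_eq_square algebra_simps)
    thus "u2 * X + u1 * Y = b" using u by simp
  qed
  have XY: "X^2 + Y^2 = 1"
  proof -
    have "X^2 + Y^2 = (u1^2 + u2^2) * (a^2 + b^2)" unfolding X_def Y_def by (simp add: power2_eq_square algebra_simps)
    thus ?thesis using u ab by simp
  qed
  have X1: "X \<noteq> -1"
  proof
    assume X: "X = -1"
    hence "Y = 0" using XY by simp
    hence "a = - u1" "b = - u2" using aX bX X by auto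
    hence "p = (x0 - r * u1, y0 - r * u2)" using r unfolding a_def b_def
      by (cases p) (auto simp: field_simps)
    thus False using ne by simp
  qed
  have t: "tinv x0 y0 r u1 u2 p = Y / (1 + X)" unfolding tinv_def Let_def a_def[symmetric] b_def[symmetric] X_def Y_def by simp
  have cs: "cc (Y / (1 + X)) = X" "ss (Y / (1 + X)) = Y" using cc_ss_of[OF XY X1] by auto
  show ?thesis unfolding t Pm_def cs aX bX using r unfolding a_def b_def by (cases p) auto
qed



lemma Pm_poly:
  shows "poly [:x0 + r*u1, -2*r*u2, x0 - r*u1:] t / poly [:1,0,1:] t = fst (Pm x0 y0 r u1 u2 t)"
    and "poly [:y0 + r*u2, 2*r*u1, y0 - r*u2:] t / poly [:1,0,1:] t = snd (Pm x0 y0 r u1 u2 t)"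
proof -
  have p: "1 + t^2 > 0" by (simp add: add_pos_nonneg)
  have D: "poly [:1,0,1:] t = 1 + t^2" by (simp add: power2_eq_square)
  have ccD: "cc t * (1 + t^2) = 1 - t^2" and ssD: "ss t * (1 + t^2) = 2 * t"
    unfolding cc_def ss_def using p by auto
  have "fst (Pm x0 y0 r u1 u2 t) * (1 + t^2) = x0 * (1 + t^2) + r * (u1 * (cc t * (1 + t^2)) - u2 * (ss t * (1 + t^2)))"
    unfolding Pm_def fst_conv by algebra
  also have "\<dots> = x0 * (1 + t^2) + r * (u1 * (1 - t^2) - u2 * (2 * t))" by (simp only: ccD ssD)
  also have "\<dots> = poly [:x0 + r*u1, -2*r*u2, x0 - r*u1:] t" by (simp add: power2_eq_square) algebra
  finally have e1: "poly [:x0 + r*u1, -2*r*u2, x0 - r*u1:] t = fst (Pm x0 y0 r u1 u2 t) * (1 + t^2)" ..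
  have "snd (Pm x0 y0 r u1 u2 t) * (1 + t^2) = y0 * (1 + t^2) + r * (u2 * (cc t * (1 + t^2)) + u1 * (ss t * (1 + t^2)))"
    unfolding Pm_def snd_conv by algebra
  also have "\<dots> = y0 * (1 + t^2) + r * (u2 * (1 - t^2) + u1 * (2 * t))" by (simp only: ccD ssD)
  also have "\<dots> = poly [:y0 + r*u2, 2*r*u1, y0 - r*u2:] t" by (simp add: power2_eq_square) algebra
  finally have e2: "poly [:y0 + r*u2, 2*r*u1, y0 - r*u2:] t = snd (Pm x0 y0 r u1 u2 t) * (1 + t^2)" ..
  show "poly [:x0 + r*u1, -2*r*u2, x0 - r*u1:] t / poly [:1,0,1:] t = fst (Pm x0 y0 r u1 u2 t)"
    unfolding D e1 using p by simp
  show "poly [:y0 + r*u2, 2*r*u1, y0 - r*u2:] t / poly [:1,0,1:] t = snd (Pm x0 y0 r u1 u2 t)"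
    unfolding D e2 using p by simp
qed

lemma deg3: "degree [:a, b, c:] \<le> 2"
  using degree_pCons_le[of a "[:b, c:]"] degree_pCons_le[of b "[:c:]"] by simp

lemma circle_count:
  fixes f :: bipoly
  assumes r: "r > 0" and S: "finite S" "2*d < card S" "S \<subseteq> zero_set f"
    "S \<subseteq> {(x,y). (x-x0)^2+(y-y0)^2 = r^2}" and f: "total_degree f \<le> d"
  shows "\<exists>z. {(x,y). (x-x0)^2+(y-y0)^2 = r^2} - {z} \<subseteq> zero_set f"
proof -
  define ex where "ex t = (x0 - r * cc t, y0 - r * ss t)" for t
  have "inj ex"
  proof
    fix s t assume "ex s = ex t"
    hence "cc s = cc t" "ss s = ss t" using r by (auto simp: ex_def)
    hence "ss s / (1 + cc s) = ss t / (1 + cc t)" by simp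
    thus "s = t" unfolding ss_cc_inv .
  qed
  hence "infinite (range ex)" using finite_imageD infinite_UNIV_char_0 by blast
  hence "\<not> range ex \<subseteq> S" using S(1) finite_subset by blast
  then obtain t0 where t0: "ex t0 \<notin> S" by blast
  define u1 u2 where "u1 = cc t0" and "u2 = ss t0"
  have u: "u1^2 + u2^2 = 1" using cc_ss unfolding u1_def u2_def by simp
  have exS: "(x0 - r * u1, y0 - r * u2) \<notin> S" using t0 unfolding ex_def u1_def u2_def .
  define Xp Yp Dp where "Xp = [:x0 + r*u1, -2*r*u2, x0 - r*u1:]" and "Yp = [:y0 + r*u2, 2*r*u1, y0 - r*u2:]"
    and "Dp = [:1::real,0,1:]"
  have dX: "degree Xp \<le> 2" and dY: "degree Yp \<le> 2" and dD: "degree Dp \<le> 2"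
    unfolding Xp_def Yp_def Dp_def by (rule deg3)+
  obtain g where g: "degree g \<le> 2 * d"
    "\<And>t. poly Dp t \<noteq> 0 \<Longrightarrow> poly g t = poly Dp t ^ d * eval2 f (poly Xp t / poly Dp t) (poly Yp t / poly Dp t)"
    using homog2[OF dX dY dD f] by blast
  have Dpos: "poly Dp t > 0" for t unfolding Dp_def by (simp add: add_pos_nonneg)
  have gP: "poly g t = poly Dp t ^ d * eval2 f (fst (Pm x0 y0 r u1 u2 t)) (snd (Pm x0 y0 r u1 u2 t))" for t
  proof -
    have "poly Xp t / poly Dp t = fst (Pm x0 y0 r u1 u2 t)" unfolding Xp_def Dp_def by (rule Pm_poly(1))
    moreover have "poly Yp t / poly Dp t = snd (Pm x0 y0 r u1 u2 t)" unfolding Yp_def Dp_def by (rule Pm_poly(2))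
    moreover have "poly Dp t \<noteq> 0" using Dpos[of t] by simp
    ultimately show ?thesis using g(2)[of t] by simp
  qed
  define T where "T = tinv x0 y0 r u1 u2"
  have PT: "Pm x0 y0 r u1 u2 (T p) = p" if pS: "p \<in> S" for p
  proof -
    have "p \<in> {(x,y). (x-x0)^2+(y-y0)^2 = r^2}" using S(4) pS by blast
    hence circ: "(fst p - x0)^2 + (snd p - y0)^2 = r^2" by (cases p) simp
    have ne: "p \<noteq> (x0 - r * u1, y0 - r * u2)" using exS pS by blast
    show ?thesis unfolding T_def by (rule Pm_tinv[OF u r circ ne])
  qed
  have "inj_on T S" by (rule inj_on_inverseI[where g="Pm x0 y0 r u1 u2"]) (rule PT)
  hence cardT: "card (T ` S) = card S" by (simp add: card_image)
  have roots: "T ` S \<subseteq> {t. poly g t = 0}"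
  proof
    fix t assume "t \<in> T ` S"
    then obtain p where p: "p \<in> S" "t = T p" by blast
    have "eval2 f (fst p) (snd p) = 0" using S(3) p(1) by (cases p) (auto simp: zero_set_def)
    thus "t \<in> {t. poly g t = 0}" using gP[of t] PT[OF p(1)] p(2) by simp
  qed
  have "g = 0"
  proof (rule ccontr)
    assume g0: "g \<noteq> 0"
    have "card (T ` S) \<le> card {t. poly g t = 0}"
      using roots poly_roots_finite[OF g0] by (rule card_mono[rotated])
    also have "\<dots> \<le> degree g" by (rule card_poly_roots_bound[OF g0])
    finally show False using cardT S(2) g(1) by simp
  qed
  have "{(x,y). (x-x0)^2+(y-y0)^2 = r^2} - {(x0 - r * u1, y0 - r * u2)} \<subseteq> zero_set f"
  proof
    fix p assume p: "p \<in> {(x,y). (x-x0)^2+(y-y0)^2 = r^2} - {(x0 - r * u1, y0 - r * u2)}"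
    have circ: "(fst p - x0)^2 + (snd p - y0)^2 = r^2" using p by (cases p) simp
    have ne: "p \<noteq> (x0 - r * u1, y0 - r * u2)" using p by blast
    have pp: "Pm x0 y0 r u1 u2 (tinv x0 y0 r u1 u2 p) = p" by (rule Pm_tinv[OF u r circ ne])
    have "poly Dp (tinv x0 y0 r u1 u2 p) ^ d * eval2 f (fst p) (snd p) = 0"
      using gP[of "tinv x0 y0 r u1 u2 p"] pp \<open>g = 0\<close> by simp
    hence "eval2 f (fst p) (snd p) = 0" using Dpos[of "tinv x0 y0 r u1 u2 p"] by simp
    thus "p \<in> zero_set f" by (cases p) (auto simp: zero_set_def)
  qed
  thus ?thesis by blast
qed



lemma isom_sq:
  assumes "isometry T"
  shows "(fst (T p) - fst (T q))^2 + (snd (T p) - snd (T q))^2 = (fst p - fst q)^2 + (snd p - snd q)^2"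
proof -
  have "dist (T p) (T q) = dist p q" using assms unfolding isometry_def by blast
  hence "sqrt ((fst (T p) - fst (T q))^2 + (snd (T p) - snd (T q))^2) = sqrt ((fst p - fst q)^2 + (snd p - snd q)^2)"
    by (simp add: dist_prod_def dist_real_def)
  thus ?thesis by simp
qed

lemma isom_form:
  assumes T: "isometry T"
  shows "\<exists>a b s e g. a^2 + b^2 = 1 \<and> (s = 1 \<or> s = -1) \<and> (\<forall>x y. T (x, y) = (a*x - s*b*y + e, b*x + s*a*y + g))"
proof -
  define e g where "e = fst (T (0,0))" and "g = snd (T (0,0))"
  define a b where "a = fst (T (1,0)) - e" and "b = snd (T (1,0)) - g"
  define w1 w2 where "w1 = fst (T (0,1)) - e" and "w2 = snd (T (0,1)) - g"
  have ab: "a^2 + b^2 = 1" using isom_sq[OF T, of "(1,0)" "(0,0)"] by (simp add: a_def b_def e_def g_def)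
  have w: "w1^2 + w2^2 = 1" using isom_sq[OF T, of "(0,1)" "(0,0)"] by (simp add: w1_def w2_def e_def g_def)
  have aw0: "(a - w1)^2 + (b - w2)^2 = 2" using isom_sq[OF T, of "(1,0)" "(0,1)"]
    by (simp add: a_def b_def w1_def w2_def)
  have aw: "a * w1 + b * w2 = 0" using aw0 ab w by (simp add: power2_eq_square algebra_simps)
  define s where "s = a * w2 - b * w1"
  have w1s: "w1 = - s * b" using aw ab unfolding s_def by algebra
  have w2s: "w2 = s * a" using aw ab unfolding s_def by algebra
  have s2: "s^2 = 1"
  proof -
    have "s^2 * (a^2 + b^2) = 1" using w unfolding w1s w2s by (simp add: power2_eq_square algebra_simps)
    thus ?thesis using ab by simp
  qed
  hence s: "s = 1 \<or> s = -1" by (simp add: power2_eq_1_iff)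
  have form: "T (x, y) = (a*x - s*b*y + e, b*x + s*a*y + g)" for x y
  proof -
    define P1 P2 where "P1 = fst (T (x,y)) - e" and "P2 = snd (T (x,y)) - g"
    have n: "P1^2 + P2^2 = x^2 + y^2" using isom_sq[OF T, of "(x,y)" "(0,0)"] by (simp add: P1_def P2_def e_def g_def)
    have n1: "(P1 - a)^2 + (P2 - b)^2 = (x - 1)^2 + y^2" using isom_sq[OF T, of "(x,y)" "(1,0)"]
      by (simp add: P1_def P2_def a_def b_def)
    have n2: "(P1 - w1)^2 + (P2 - w2)^2 = x^2 + (y - 1)^2" using isom_sq[OF T, of "(x,y)" "(0,1)"]
      by (simp add: P1_def P2_def w1_def w2_def)
    have dx: "P1 * a + P2 * b = x" using n n1 ab by (simp add: power2_eq_square algebra_simps)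
    have dy: "P1 * w1 + P2 * w2 = y" using n n2 w by (simp add: power2_eq_square algebra_simps)
    hence dy': "s * (P2 * a - P1 * b) = y" unfolding w1s w2s by (simp add: algebra_simps)
    have "P2 * a - P1 * b = s * y" using dy' s by auto
    have "P1 = a * (P1 * a + P2 * b) - b * (P2 * a - P1 * b)"
      using ab by algebra
    hence e1: "P1 = a * x - s * b * y" using dx \<open>P2 * a - P1 * b = s * y\<close> by simp
    have "P2 = b * (P1 * a + P2 * b) + a * (P2 * a - P1 * b)"
      using ab by algebra
    hence e2: "P2 = b * x + s * a * y" using dx \<open>P2 * a - P1 * b = s * y\<close> by simp
    show ?thesis using e1 e2 unfolding P1_def P2_def by (simp add: prod_eq_iff)
  qed
  show ?thesis using ab s form by blast
qed



lemma sym_id: "id \<in> symmetries C"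
  by (simp add: symmetries_def isometry_def)

lemma sym_comp:
  assumes "T1 \<in> symmetries C" "T2 \<in> symmetries C" shows "T1 \<circ> T2 \<in> symmetries C"
proof -
  have i: "\<And>p q. dist (T1 p) (T1 q) = dist p q" "\<And>p q. dist (T2 p) (T2 q) = dist p q"
    and im: "T1 ` C = C" "T2 ` C = C"
    using assms unfolding symmetries_def isometry_def by blast+
  have "isometry (T1 \<circ> T2)" unfolding isometry_def comp_apply using i by metis
  moreover have "(T1 \<circ> T2) ` C = C" unfolding image_comp[symmetric] using im by simp
  ultimately show ?thesis unfolding symmetries_def by blast
qed

lemma no_trans:
  assumes irr: "irreducible f" and Cf: "C = zero_set f" and inf: "infinite C" and nl: "\<not> is_line C"
    and T1: "T1 \<in> symmetries C" and T2: "T2 \<in> symmetries C"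
    and tr: "\<And>q. T1 q = (fst (T2 q) + v1, snd (T2 q) + v2)"
  shows "v1 = 0 \<and> v2 = 0"
proof (rule ccontr)
  assume nz: "\<not> (v1 = 0 \<and> v2 = 0)"
  have step: "(fst p + v1, snd p + v2) \<in> C" if "p \<in> C" for p
  proof -
    have "p \<in> T2 ` C" using T2 that by (simp add: symmetries_def)
    then obtain q where q: "q \<in> C" "p = T2 q" by blast
    have "T1 q \<in> C" using T1 q(1) by (auto simp: symmetries_def)
    thus ?thesis using tr[of q] q(2) by simp
  qed
  have iter: "(fst p + real n * v1, snd p + real n * v2) \<in> C" if "p \<in> C" for p n
  proof (induction n)
    case 0 then show ?case using that by simp
  next
    case (Suc n)
    from step[OF Suc] show ?case by (simp add: algebra_simps)
  qed
  obtain p0 where p0: "p0 \<in> C" using inf by (metis ex_in_conv finite.emptyI)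
  define h where "h n = (fst p0 + real n * v1, snd p0 + real n * v2)" for n
  have "inj h"
  proof
    fix m n assume "h m = h n"
    hence "real m * v1 = real n * v1" "real m * v2 = real n * v2" by (auto simp: h_def)
    thus "m = n" using nz by auto
  qed
  hence infS: "infinite (range h)" using finite_imageD infinite_UNIV_nat by blast
  have SC: "range h \<subseteq> zero_set f" using iter[OF p0] Cf by (auto simp: h_def)
  have SL: "range h \<subseteq> {(x, y). (- v2) * x + v1 * y = (- v2) * fst p0 + v1 * snd p0}"
    by (auto simp: h_def algebra_simps)
  have "((- v2), v1) \<noteq> (0, 0)" using nz by auto
  from line_lemma[OF irr this SC SL infS] nl Cf show False by simp
qed

definition rotf :: "real \<Rightarrow> real \<Rightarrow> real \<Rightarrow> real \<Rightarrow> (real \<times> real \<Rightarrow> real \<times> real) \<Rightarrow> bool" where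
  "rotf a b e g T \<longleftrightarrow> a^2 + b^2 = 1 \<and> (\<forall>x y. T (x, y) = (a*x - b*y + e, b*x + a*y + g))"

definition reff :: "real \<Rightarrow> real \<Rightarrow> real \<Rightarrow> real \<Rightarrow> (real \<times> real \<Rightarrow> real \<times> real) \<Rightarrow> bool" where
  "reff a b e g T \<longleftrightarrow> a^2 + b^2 = 1 \<and> (\<forall>x y. T (x, y) = (a*x + b*y + e, b*x - a*y + g))"

lemma rotf_app: "rotf a b e g T \<Longrightarrow> T q = (a * fst q - b * snd q + e, b * fst q + a * snd q + g)"
  unfolding rotf_def by (cases q) auto

lemma reff_app: "reff a b e g T \<Longrightarrow> T q = (a * fst q + b * snd q + e, b * fst q - a * snd q + g)"
  unfolding reff_def by (cases q) auto

lemma isom_cases: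
  assumes "isometry T"
  shows "(\<exists>a b e g. rotf a b e g T) \<or> (\<exists>a b e g. reff a b e g T)"
proof -
  obtain a b s e g where f: "a^2 + b^2 = 1" "s = 1 \<or> s = -1" "\<And>x y. T (x, y) = (a*x - s*b*y + e, b*x + s*a*y + g)"
    using isom_form[OF assms] by blast
  from f(2) show ?thesis
  proof
    assume "s = 1" hence "rotf a b e g T" using f unfolding rotf_def by auto
    thus ?thesis by blast
  next
    assume "s = -1" hence "reff a b e g T" using f unfolding reff_def by auto
    thus ?thesis by blast
  qed
qed

lemma rot_comp_diff:
  assumes "rotf a1 b1 e1 g1 T1" "rotf a2 b2 e2 g2 T2"
  shows "(T1 \<circ> T2) q = (fst ((T2 \<circ> T1) q) + ((a1*e2 - b1*g2 + e1) - (a2*e1 - b2*g1 + e2)),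
                        snd ((T2 \<circ> T1) q) + ((b1*e2 + a1*g2 + g1) - (b2*e1 + a2*g1 + g2)))"
  using rotf_app[OF assms(1)] rotf_app[OF assms(2)] by (simp add: algebra_simps)

lemma rot_fix:
  assumes R: "rotf a b e g T" and ne: "(a, b) \<noteq> (1, 0)"
  shows "\<exists>c. T c = c \<and> (\<forall>p. T p = p \<longrightarrow> p = c)"
proof -
  define D where "D = (1 - a)^2 + b^2"
  have "1 - a \<noteq> 0 \<or> b \<noteq> 0" using ne by auto
  hence D: "D > 0" unfolding D_def by (simp add: sum_power2_gt_zero_iff)
  define c where "c = (((1 - a) * e - b * g) / D, (b * e + (1 - a) * g) / D)"
  have Dc1: "D * fst c = (1 - a) * e - b * g" and Dc2: "D * snd c = b * e + (1 - a) * g"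
    unfolding c_def using D by auto
  have cfix: "T c = c"
  proof -
    have "D * (a * fst c - b * snd c + e - fst c) = 0" using Dc1 Dc2 unfolding D_def by algebra
    hence e1: "a * fst c - b * snd c + e = fst c" using D by simp
    have "D * (b * fst c + a * snd c + g - snd c) = 0" using Dc1 Dc2 unfolding D_def by algebra
    hence e2: "b * fst c + a * snd c + g = snd c" using D by simp
    show ?thesis using rotf_app[OF R, of c] e1 e2 by (simp add: prod_eq_iff)
  qed
  have uniq: "p = c" if "T p = p" for p
  proof -
    define X Y where "X = fst p - fst c" and "Y = snd p - snd c"
    have h1: "a * fst p - b * snd p + e = fst p" "b * fst p + a * snd p + g = snd p"
      using rotf_app[OF R, of p] that by (auto simp: prod_eq_iff)
    have h2: "a * fst c - b * snd c + e = fst c" "b * fst c + a * snd c + g = snd c"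
      using rotf_app[OF R, of c] cfix by (auto simp: prod_eq_iff)
    have l1: "(1 - a) * X + b * Y = 0" and l2: "- b * X + (1 - a) * Y = 0"
      using h1 h2 unfolding X_def Y_def by (simp_all add: algebra_simps)
    have "D * X = 0" using l1 l2 unfolding D_def by algebra
    moreover have "D * Y = 0" using l1 l2 unfolding D_def by algebra
    ultimately have "X = 0" "Y = 0" using D by auto
    thus ?thesis unfolding X_def Y_def by (simp add: prod_eq_iff)
  qed
  show ?thesis using cfix uniq by blast
qed



lemma rot_comm:
  assumes irr: "irreducible f" and Cf: "C = zero_set f" and inf: "infinite C" and nl: "\<not> is_line C"
    and T1: "T1 \<in> symmetries C" and T2: "T2 \<in> symmetries C"
    and R1: "rotf a1 b1 e1 g1 T1" and R2: "rotf a2 b2 e2 g2 T2"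
  shows "T1 \<circ> T2 = T2 \<circ> T1"
proof -
  have "(a1*e2 - b1*g2 + e1) - (a2*e1 - b2*g1 + e2) = 0 \<and> (b1*e2 + a1*g2 + g1) - (b2*e1 + a2*g1 + g2) = 0"
    by (rule no_trans[OF irr Cf inf nl sym_comp[OF T1 T2] sym_comp[OF T2 T1]])
       (rule rot_comp_diff[OF R1 R2])
  hence "(T1 \<circ> T2) q = (T2 \<circ> T1) q" for q using rot_comp_diff[OF R1 R2, of q] by simp
  thus ?thesis by blast
qed

lemma rot_center:
  assumes R: "rotf a b e g T" and c: "T c = c"
  shows "T q = (fst c + a*(fst q - fst c) - b*(snd q - snd c), snd c + b*(fst q - fst c) + a*(snd q - snd c))"
proof -
  have "c = (a * fst c - b * snd c + e, b * fst c + a * snd c + g)" using rotf_app[OF R, of c] c by simp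
  hence h: "fst c = a * fst c - b * snd c + e" "snd c = b * fst c + a * snd c + g" by (simp_all add: prod_eq_iff)
  show ?thesis using rotf_app[OF R, of q] h by (simp add: prod_eq_iff algebra_simps)
qed

lemma rot_eq_point:
  assumes R1: "rotf a1 b1 e1 g1 T1" and R2: "rotf a2 b2 e2 g2 T2"
    and c1: "T1 c = c" and c2: "T2 c = c" and pc: "p \<noteq> c" and eq: "T1 p = T2 p"
  shows "T1 = T2"
proof -
  define X Y where "X = fst p - fst c" and "Y = snd p - snd c"
  have XY: "X \<noteq> 0 \<or> Y \<noteq> 0" using pc unfolding X_def Y_def by (auto simp: prod_eq_iff)
  have h: "a1 * X - b1 * Y = a2 * X - b2 * Y" "b1 * X + a1 * Y = b2 * X + a2 * Y"
    using eq rot_center[OF R1 c1, of p] rot_center[OF R2 c2, of p] unfolding X_def Y_def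
    by (simp_all add: prod_eq_iff)
  have "((a1 - a2)^2 + (b1 - b2)^2) * X = 0" using h by algebra
  moreover have "((a1 - a2)^2 + (b1 - b2)^2) * Y = 0" using h by algebra
  ultimately have "(a1 - a2)^2 + (b1 - b2)^2 = 0" using XY by auto
  hence "a1 = a2" "b1 = b2" by (simp_all add: sum_power2_eq_zero_iff)
  hence "T1 q = T2 q" for q using rot_center[OF R1 c1, of q] rot_center[OF R2 c2, of q] by simp
  thus ?thesis by blast
qed

lemma isom_dist_fix:
  assumes "isometry T" "T c = c"
  shows "(fst (T p) - fst c)^2 + (snd (T p) - snd c)^2 = (fst p - fst c)^2 + (snd p - snd c)^2"
  using isom_sq[OF assms(1), of p c] assms(2) by simp

lemma ref_comp:
  assumes S: "reff a0 b0 e0 g0 \<sigma>" and T: "reff a b e g T"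
  shows "rotf (a0*a + b0*b) (b0*a - a0*b) (a0*e + b0*g + e0) (b0*e - a0*g + g0) (\<sigma> \<circ> T)"
proof -
  have n: "a0^2 + b0^2 = 1" "a^2 + b^2 = 1" using S T unfolding reff_def by auto
  have "(a0*a + b0*b)^2 + (b0*a - a0*b)^2 = (a0^2 + b0^2) * (a^2 + b^2)" by algebra
  hence "(a0*a + b0*b)^2 + (b0*a - a0*b)^2 = 1" using n by simp
  moreover have "(\<sigma> \<circ> T) (x, y) = ((a0*a + b0*b)*x - (b0*a - a0*b)*y + (a0*e + b0*g + e0),
      (b0*a - a0*b)*x + (a0*a + b0*b)*y + (b0*e - a0*g + g0))" for x y
    using reff_app[OF S, of "T (x,y)"] reff_app[OF T, of "(x,y)"] by (simp add: algebra_simps)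
  ultimately show ?thesis unfolding rotf_def by blast
qed

lemma isom_inj: "isometry T \<Longrightarrow> inj T"
  unfolding isometry_def inj_def by (metis dist_eq_0_iff)



theorem lemma2p6:
  fixes C :: "(real \<times> real) set" and d :: nat
  assumes "plane_curve C" and "irreducible_curve C" and "curve_degree C = d"
    and "\<not> is_line C" and "\<not> is_circle C"
  shows "finite (symmetries C) \<and> card (symmetries C) \<le> 4 * d"
proof -
  obtain f where irr: "irreducible f" and Cf: "C = zero_set f"
    using assms(2) unfolding irreducible_curve_def by metis
  have inf: "infinite C" using assms(1) unfolding plane_curve_def by blast
  obtain f' where "f' \<noteq> 0" "C = zero_set f'" using assms(1) unfolding plane_curve_def by blast
  hence ex: "\<exists>d f. f \<noteq> 0 \<and> zero_set f = C \<and> total_degree f = d" by blast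
  obtain f0 where f0: "zero_set f0 = C" "total_degree f0 = d"
    using LeastI_ex[OF ex] assms(3) unfolding curve_degree_def by blast
  have nl: "\<not> is_line C" and nc: "\<not> is_circle C" using assms(4,5) .
  have nocirc: False if rho: "\<rho> > 0" and S: "finite S" "2*d < card S" "S \<subseteq> C"
    "S \<subseteq> {(x,y). (x-c1)^2+(y-c2)^2 = \<rho>^2}" for S c1 c2 \<rho>
  proof -
    obtain z where z: "{(x,y). (x-c1)^2+(y-c2)^2 = \<rho>^2} - {z} \<subseteq> zero_set f0"
      using circle_count[OF rho S(1,2) _ S(4), of f0] S(3) f0 by auto
    have "is_circle (zero_set f)" by (rule circle_lemma[OF irr rho]) (use z f0 Cf in auto)
    thus False using nc Cf by simp
  qed
  obtain p1 where p1: "p1 \<in> C" using inf by (metis ex_in_conv finite.emptyI)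
  have d1: "d \<ge> 1"
  proof (rule ccontr)
    assume "\<not> d \<ge> 1" hence "d = 0" by simp
    show False
      by (rule nocirc[of 1 "{p1}" "fst p1 - 1" "snd p1"]) (use p1 \<open>d = 0\<close> in \<open>auto simp: prod_eq_iff\<close>)
  qed
  define G where "G = symmetries C"
  define Rot where "Rot = {T \<in> G. \<exists>a b e g. rotf a b e g T}"
  define Ref where "Ref = {T \<in> G. \<exists>a b e g. reff a b e g T}"
  have isoG: "isometry T" "T ` C = C" if "T \<in> G" for T using that unfolding G_def symmetries_def by auto
  have GU: "G = Rot \<union> Ref"
  proof
    show "Rot \<union> Ref \<subseteq> G" unfolding Rot_def Ref_def by blast
    show "G \<subseteq> Rot \<union> Ref"
    proof
      fix T assume TG: "T \<in> G"
      from isom_cases[OF isoG(1)[OF TG]] show "T \<in> Rot \<union> Ref"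
        unfolding Rot_def Ref_def using TG by blast
    qed
  qed
  have RotB: "finite Rot \<and> card Rot \<le> 2 * d"
  proof (rule ccontr)
    assume nb: "\<not> (finite Rot \<and> card Rot \<le> 2 * d)"
    obtain S where S: "S \<subseteq> Rot" "card S = 2 * d + 1" "finite S"
    proof (cases "finite Rot")
      case True
      hence "2 * d + 1 \<le> card Rot" using nb by simp
      from obtain_subset_with_card_n[OF this] that show ?thesis by blast
    next
      case False
      from infinite_arbitrarily_large[OF False, of "2 * d + 1"] that show ?thesis by blast
    qed
    have "\<exists>T0 \<in> S. T0 \<noteq> id"
    proof (rule ccontr)
      assume "\<not> (\<exists>T0 \<in> S. T0 \<noteq> id)"
      hence "S \<subseteq> {id}" by blast
      hence "card S \<le> card {id::real \<times> real \<Rightarrow> real \<times> real}" by (intro card_mono) auto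
      hence "card S \<le> 1" by simp
      thus False using S(2) d1 by simp
    qed
    then obtain T0 where T0S: "T0 \<in> S" and T0id: "T0 \<noteq> id" by blast
    have T0G: "T0 \<in> G" using T0S S(1) unfolding Rot_def by blast
    obtain a0 b0 e0 g0 where R0: "rotf a0 b0 e0 g0 T0" using T0S S(1) unfolding Rot_def by blast
    have ab0: "(a0, b0) \<noteq> (1, 0)"
    proof
      assume "(a0, b0) = (1, 0)"
      hence a0: "a0 = 1" "b0 = 0" by auto
      have tq: "T0 q = (fst (id q) + e0, snd (id q) + g0)" for q using rotf_app[OF R0, of q] a0 by simp
      have T0s: "T0 \<in> symmetries C" using T0G G_def by simp
      have "e0 = 0 \<and> g0 = 0" by (rule no_trans[OF irr Cf inf nl T0s sym_id tq])
      hence "T0 = id" using tq by (auto simp: fun_eq_iff)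
      thus False using T0id by simp
    qed
    obtain c where c: "T0 c = c" "\<And>p. T0 p = p \<Longrightarrow> p = c" using rot_fix[OF R0 ab0] by blast
    have fixc: "T c = c" if TRot: "T \<in> Rot" for T
    proof -
      obtain a b e g where R: "rotf a b e g T" using TRot unfolding Rot_def by blast
      have TG: "T \<in> symmetries C" using TRot unfolding Rot_def G_def by blast
      have "T0 \<circ> T = T \<circ> T0" by (rule rot_comm[OF irr Cf inf nl _ TG R0 R]) (use T0G G_def in simp)
      hence "T0 (T c) = T (T0 c)" by (metis comp_apply)
      hence "T0 (T c) = T c" using c(1) by simp
      thus ?thesis using c(2) by blast
    qed
    have "infinite (C - {c})" using inf by simp
    hence "C - {c} \<noteq> {}" by (metis finite.emptyI)
    then obtain p where pC: "p \<in> C" and pc: "p \<noteq> c" by blast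
    define P where "P = (\<lambda>T. T p) ` S"
    have injP: "inj_on (\<lambda>T. T p) S"
    proof
      fix T1 T2 assume T1: "T1 \<in> S" and T2: "T2 \<in> S" and eq: "T1 p = T2 p"
      obtain a1 b1 e1 g1 where R1: "rotf a1 b1 e1 g1 T1" using T1 S(1) unfolding Rot_def by blast
      obtain a2 b2 e2 g2 where R2: "rotf a2 b2 e2 g2 T2" using T2 S(1) unfolding Rot_def by blast
      show "T1 = T2" by (rule rot_eq_point[OF R1 R2 _ _ pc eq]) (use T1 T2 S(1) fixc in auto)
    qed
    have cardP: "card P = 2 * d + 1" unfolding P_def using card_image[OF injP] S(2) by simp
    have PC: "P \<subseteq> C"
    proof
      fix q assume "q \<in> P"
      then obtain T where T: "T \<in> S" "q = T p" unfolding P_def by blast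
      have "T \<in> G" using T(1) S(1) unfolding Rot_def by blast
      hence "T ` C = C" using isoG by blast
      thus "q \<in> C" using pC T(2) by blast
    qed
    define \<rho> where "\<rho> = sqrt ((fst p - fst c)^2 + (snd p - snd c)^2)"
    have rho: "\<rho> > 0" using pc unfolding \<rho>_def by (auto simp: prod_eq_iff sum_power2_gt_zero_iff)
    have rho2: "\<rho>^2 = (fst p - fst c)^2 + (snd p - snd c)^2" unfolding \<rho>_def by simp
    have Pcirc: "P \<subseteq> {(x,y). (x - fst c)^2 + (y - snd c)^2 = \<rho>^2}"
    proof
      fix q assume "q \<in> P"
      then obtain T where T: "T \<in> S" "q = T p" unfolding P_def by blast
      have TR: "T \<in> Rot" using T(1) S(1) by blast
      hence "T \<in> G" unfolding Rot_def by blast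
      hence "isometry T" using isoG by blast
      from isom_dist_fix[OF this fixc[OF TR], of p] rho2 T(2)
      show "q \<in> {(x,y). (x - fst c)^2 + (y - snd c)^2 = \<rho>^2}" by (cases q) auto
    qed
    have "finite P" unfolding P_def using S(3) by simp
    show False by (rule nocirc[OF rho \<open>finite P\<close> _ PC Pcirc]) (use cardP in simp)
  qed
  have RefB: "finite Ref \<and> card Ref \<le> card Rot"
  proof (cases "Ref = {}")
    case True thus ?thesis by simp
  next
    case False
    then obtain \<sigma> where sR: "\<sigma> \<in> Ref" by blast
    obtain a0 b0 e0 g0 where S0: "reff a0 b0 e0 g0 \<sigma>" using sR unfolding Ref_def by blast
    have sG: "\<sigma> \<in> G" using sR unfolding Ref_def by blast
    have sub: "(\<lambda>T. \<sigma> \<circ> T) ` Ref \<subseteq> Rot"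
    proof
      fix U assume "U \<in> (\<lambda>T. \<sigma> \<circ> T) ` Ref"
      then obtain T where T: "T \<in> Ref" "U = \<sigma> \<circ> T" by blast
      obtain a b e g where RT: "reff a b e g T" using T(1) unfolding Ref_def by blast
      have "U \<in> G" using sym_comp[of \<sigma> C T] sG T unfolding Ref_def G_def by blast
      moreover have "\<exists>a b e g. rotf a b e g U" using ref_comp[OF S0 RT] T(2) by blast
      ultimately show "U \<in> Rot" unfolding Rot_def by blast
    qed
    have injs: "inj \<sigma>" using isom_inj isoG[OF sG] by blast
    have inj: "inj_on (\<lambda>T. \<sigma> \<circ> T) Ref"
    proof
      fix T1 T2 assume "\<sigma> \<circ> T1 = \<sigma> \<circ> T2"
      hence "\<sigma> (T1 q) = \<sigma> (T2 q)" for q by (metis comp_apply)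
      hence "T1 q = T2 q" for q using injs by (meson injD)
      thus "T1 = T2" by blast
    qed
    have fin: "finite ((\<lambda>T. \<sigma> \<circ> T) ` Ref)" using RotB sub finite_subset by blast
    hence "finite Ref" using inj finite_imageD by blast
    moreover have "card Ref \<le> card Rot"
      using card_image[OF inj] card_mono[OF _ sub] RotB by simp
    ultimately show ?thesis by blast
  qed
  have "finite G" using GU RotB RefB by simp
  moreover have "card G \<le> 4 * d"
  proof -
    have "card G \<le> card Rot + card Ref" unfolding GU by (rule card_Un_le)
    thus ?thesis using RotB RefB by simp
  qed
  ultimately show ?thesis unfolding G_def by blast
qed


end
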